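(* Let $n\ge 1$, $k\ge 1$, and let $\gamma=((i_1\,j_1),\dots,(i_k\,j_k))\in\Sigma_n(k)$. Fix $l\in\{1,\dots,k\}$. Then: 1. $i_l<x$ for every $x\in C_{\gamma_{l-1}}(j_l)$; moreover, $i_l$ is the largest element $y$ of $C_{\gamma_{l-1}}(i_l)$ such that $y$ is smaller than every element of $C_{\gamma_{l-1}}(j_l)$. 2. $j_l=\max C_{\gamma_{l-1}}(j_l)$. 3. $i_l<x$ for every $x\in C_{\gamma_{l-1}}(i_l+1)$. 4. If $i_l+1\notin\{i_1,\dots,i_{l-1}\}$, then $C_{\gamma_{l-1}}(i_l+1)=\{i_l+1\}$. 5. If $k=n-1$, $i_l=\max\{i_1,\dots,i_{n-1}\}$ and $l=\max\{s\in\{1,\dots,k\}: i_s=i_l\}$, then $j_l=i_l+1$.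
   Context: Let $n\ge1$. $\mathfrak S_n$ is the symmetric group on $\{1,\dots,n\}$; products of permutations are composed from right to left, i.e. $(\sigma\pi)(x)=\sigma(\pi(x))$. $\mathsf T_n$ denotes the set of transpositions of $\mathfrak S_n$; a transposition is always written $(i\,j)$ with $i<j$. For $\sigma\in\mathfrak S_n$, $\ell(\sigma)$ is the number of cycles of $\sigma$ (fixed points counted as cycles) and $|\sigma|=n-\ell(\sigma)$. For $\sigma_1,\sigma_2\in\mathfrak S_n$, write $\sigma_1\preccurlyeq\sigma_2$ iff $|\sigma_2|=|\sigma_1|+|\sigma_1^{-1}\sigma_2|$. For $k\ge0$, $\Sigma_n(k)=\{(\tau_1,\dots,\tau_k)\in(\mathsf T_n)^k : |\tau_1\cdots\tau_k|=k,\ \tau_1\cdots\tau_k\preccurlyeq(1\,2\,\dots\,n)\}$. For $\gamma=(\tau_1,\dots,\tau_k)\in\Sigma_n(k)$ and $0\le l\le k$, $\gamma_l=\tau_1\cdots\tau_l$ (so $\gamma_0$ is the identity). For $\pi\in\mathfrak S_n$ and $x\in\{1,\dots,n\}$, $C_\pi(x)$ denotes the cycle of $\pi$ containing $x$, regarded as a subset of $\{1,\dots,n\}$. *)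

theory Defs
  imports "HOL-Combinatorics.Combinatorics"
begin

(* Permutations of {1..n} are functions nat => nat that permute {1..n};
   composition is right-to-left: (s o p) x = s (p x). *)

definition cyc :: "(nat \<Rightarrow> nat) \<Rightarrow> nat \<Rightarrow> nat set" where
  "cyc p x = {(p ^^ m) x | m. True}"

definition ncycles :: "nat \<Rightarrow> (nat \<Rightarrow> nat) \<Rightarrow> nat" where
  "ncycles n p = card {cyc p x | x. x \<in> {1..n}}"

definition plen :: "nat \<Rightarrow> (nat \<Rightarrow> nat) \<Rightarrow> nat" where
  "plen n p = n - ncycles n p"

definition pleq :: "nat \<Rightarrow> (nat \<Rightarrow> nat) \<Rightarrow> (nat \<Rightarrow> nat) \<Rightarrow> bool" where
  "pleq n s1 s2 \<longleftrightarrow> plen n s2 = plen n s1 + plen n (inv s1 \<circ> s2)"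

definition longcyc :: "nat \<Rightarrow> nat \<Rightarrow> nat" where
  "longcyc n x = (if 1 \<le> x \<and> x < n then x + 1 else if x = n then 1 else x)"

(* A sequence of transpositions (i_1 j_1), ..., (i_k j_k) with i < j is
   represented by the list of pairs [(i_1,j_1), ..., (i_k,j_k)]. *)
definition valid_transp :: "nat \<Rightarrow> nat \<times> nat \<Rightarrow> bool" where
  "valid_transp n t \<longleftrightarrow> 1 \<le> fst t \<and> fst t < snd t \<and> snd t \<le> n"

definition tprod :: "(nat \<times> nat) list \<Rightarrow> nat \<Rightarrow> nat" where
  "tprod ts = foldr (\<lambda>t acc. transpose (fst t) (snd t) \<circ> acc) ts id"

definition gpref :: "(nat \<times> nat) list \<Rightarrow> nat \<Rightarrow> nat \<Rightarrow> nat" where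
  "gpref g l = tprod (take l g)"

definition Sigma_n :: "nat \<Rightarrow> nat \<Rightarrow> (nat \<times> nat) list set" where
  "Sigma_n n k = {g. length g = k \<and> (\<forall>t \<in> set g. valid_transp n t)
                   \<and> plen n (tprod g) = k \<and> pleq n (tprod g) (longcyc n)}"

end

theory Submission
  imports Defs
begin

lemma orbit_least:
  assumes "x \<in> S" "\<forall>z\<in>S. f z \<in> S" shows "orbit f x \<subseteq> S"
proof
  fix y assume "y \<in> orbit f x" then show "y \<in> S" by induct (use assms in auto)
qed

lemma pass:
  assumes "x \<in> X" "\<forall>z\<in>X. z \<noteq> a \<longrightarrow> f z \<in> X" "(f^^N) x \<notin> X"
  shows "\<exists>m<N. (f^^m) x = a"
  using assms(3)
proof (induction N)
  case 0 then show ?case using assms(1) by simp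
next
  case (Suc N)
  show ?case
  proof (cases "(f^^N) x \<in> X")
    case True
    then have "(f^^N) x = a" using assms(2) Suc.prems by auto
    then show ?thesis by auto
  next
    case False
    then show ?thesis using Suc.IH less_Suc_eq by blast
  qed
qed

lemma merge_in:
  assumes pf: "permutation f" and ab: "a \<noteq> b" and nb: "b \<notin> orbit f a"
  shows "b \<in> orbit (f \<circ> transpose a b) a"
proof (rule ccontr)
  define g where "g = f \<circ> transpose a b"
  have pg: "permutation g" unfolding g_def by (intro permutation_compose pf permutation_swap_id)
  define X where "X = orbit g a"
  assume "b \<notin> orbit (f \<circ> transpose a b) a"
  then have bX: "b \<notin> X" unfolding X_def g_def .
  have aX: "a \<in> X" unfolding X_def by (rule permutation_self_in_orbit[OF pg])
  have fbX: "f b \<in> X" using orbit.base[of g a] unfolding X_def g_def by simp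
  have cl: "\<forall>z\<in>X. z \<noteq> a \<longrightarrow> f z \<in> X"
  proof (intro ballI impI)
    fix z assume z: "z \<in> X" "z \<noteq> a"
    then have "z \<noteq> b" using bX by auto
    then have "g z = f z" using z unfolding g_def by simp
    then show "f z \<in> X" using z orbit.step[of z g a] unfolding X_def by simp
  qed
  have "b \<in> orbit f (f b)"
    using permutation_orbit_step[OF pf, of b] permutation_self_in_orbit[OF pf, of b] by simp
  then have "b \<in> {(f^^n) (f b) | n. True}" using orbit_altdef_permutation[OF pf, of "f b"] by simp
  then obtain N where "b = (f^^N) (f b)" by blast
  then have N: "(f^^N) (f b) = b" by simp
  then obtain m where "(f^^m) (f b) = a" using pass[OF fbX cl, of N] bX by auto
  then have "a \<in> orbit f (f b)"
    using orbit_altdef_permutation[OF pf, of "f b"] by auto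
  then have "a \<in> orbit f b" using permutation_orbit_step[OF pf, of b] by simp
  then have "b \<in> orbit f a"
    using orbit_swap[OF permutation_self_in_orbit[OF pf, of b]] by blast
  then show False using nb by simp
qed

lemma split_notin:
  assumes pf: "permutation f" and ab: "a \<noteq> b" and bin: "b \<in> orbit f a"
  shows "b \<notin> orbit (f \<circ> transpose a b) a"
proof -
  define g where "g = f \<circ> transpose a b"
  have aob: "a \<in> orbit f b"
    using orbit_swap[OF permutation_self_in_orbit[OF pf, of a] bin] .
  have "a \<in> orbit f (f b)" using aob permutation_orbit_step[OF pf, of b] by simp
  define t where "t = funpow_dist f (f b) a"
  have ft: "(f^^t) (f b) = a" unfolding t_def by (rule funpow_dist_prop) fact
  have lt: "\<And>m. m < t \<Longrightarrow> (f^^m) (f b) \<noteq> a" unfolding t_def by (rule funpow_dist_least)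
  define W where "W = {(f^^m) (f b) | m. m \<le> t}"
  have bW: "b \<notin> W"
  proof
    assume "b \<in> W"
    then obtain m where m: "m \<le> t" "(f^^m) (f b) = b" unfolding W_def by auto
    then have per: "(f^^(Suc m)) b = b" by (simp add: funpow_swap1)
    have "a \<in> {(f^^n) b | n. True}" using aob orbit_altdef_permutation[OF pf, of b] by simp
    then obtain r where "a = (f^^r) b" by blast
    then have r: "(f^^r) b = a" by simp
    define q where "q = r mod Suc m"
    have "(f^^q) b = a" unfolding q_def using funpow_mod_eq[where f=f and n="Suc m" and x=b and m=r] per r by simp
    moreover have "q \<le> m" unfolding q_def by simp
    ultimately show False
    proof (cases q)
      case 0 then show ?thesis using \<open>(f^^q) b = a\<close> ab by simp
    next
      case (Suc q')
      then have "(f^^q') (f b) = a" using \<open>(f^^q) b = a\<close> by (simp add: funpow_swap1)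
      moreover have "q' < t" using Suc \<open>q \<le> m\<close> m(1) by simp
      ultimately show False using lt by blast
    qed
  qed
  have aW: "a \<in> W" unfolding W_def using ft by auto
  have cl: "\<forall>z\<in>W. g z \<in> W"
  proof
    fix z assume "z \<in> W"
    then obtain m where m: "m \<le> t" "z = (f^^m) (f b)" unfolding W_def by auto
    show "g z \<in> W"
    proof (cases "m = t")
      case True
      then have "z = a" using m ft by simp
      then have "g z = f b" unfolding g_def by simp
      then show ?thesis unfolding W_def by (auto intro: exI[of _ 0])
    next
      case False
      then have "z \<noteq> a" using lt m by auto
      moreover have "z \<noteq> b" using bW \<open>z \<in> W\<close> by auto
      ultimately have "g z = f z" unfolding g_def by simp
      also have "\<dots> = (f^^(Suc m)) (f b)" using m by simp
      finally show ?thesis unfolding W_def using False m(1)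
        by (intro CollectI exI[of _ "Suc m"]) simp
    qed
  qed
  have "orbit g a \<subseteq> W" by (rule orbit_least[OF aW cl])
  then show ?thesis using bW unfolding g_def by auto
qed

lemma orbit_cl:
  assumes "permutation f" "y \<in> orbit f x" shows "orbit f y = orbit f x"
  using orbit_cyclic_eq3[OF cyclic_on_orbit'[OF assms(1)] assms(2)] .

lemma merge_orbit:
  assumes pf: "permutation f" and ab: "a \<noteq> b" and nb: "b \<notin> orbit f a"
  shows "orbit (f \<circ> transpose a b) a = orbit f a \<union> orbit f b"
    and "z \<notin> orbit f a \<union> orbit f b \<Longrightarrow> orbit (f \<circ> transpose a b) z = orbit f z"
proof -
  define g where "g = f \<circ> transpose a b"
  have pg: "permutation g" unfolding g_def by (intro permutation_compose pf permutation_swap_id)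
  have bg: "b \<in> orbit g a" unfolding g_def by (rule merge_in[OF pf ab nb])
  have ag: "a \<in> orbit g a" by (rule permutation_self_in_orbit[OF pg])
  have s1: "orbit g a \<subseteq> orbit f a \<union> orbit f b"
  proof (rule orbit_least)
    show "a \<in> orbit f a \<union> orbit f b" using permutation_self_in_orbit[OF pf] by auto
    show "\<forall>z\<in>orbit f a \<union> orbit f b. g z \<in> orbit f a \<union> orbit f b"
    proof
      fix z assume z: "z \<in> orbit f a \<union> orbit f b"
      show "g z \<in> orbit f a \<union> orbit f b"
      proof (cases "z = a \<or> z = b")
        case True then show ?thesis unfolding g_def using orbit.base[of f] by auto
      next
        case False then have "g z = f z" unfolding g_def by auto
        then show ?thesis using z orbit.step[of _ f] by auto
      qed
    qed
  qed
  have fcl: "\<forall>z\<in>orbit g a. f z \<in> orbit g a"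
  proof
    fix z assume z: "z \<in> orbit g a"
    show "f z \<in> orbit g a"
    proof (cases "z = a")
      case True
      have "g b = f a" unfolding g_def by simp
      then show ?thesis using True orbit.step[OF bg] by simp
    next
      case False note za = False
      show ?thesis
      proof (cases "z = b")
        case True
        have "g a = f b" unfolding g_def by simp
        then show ?thesis using True orbit.base[of g a] by simp
      next
        case False then have "g z = f z" using za unfolding g_def by auto
        then show ?thesis using z orbit.step[of z g a] by simp
      qed
    qed
  qed
  have s2: "orbit f a \<subseteq> orbit g a" by (rule orbit_least[OF ag fcl])
  have s3: "orbit f b \<subseteq> orbit g a" by (rule orbit_least[OF bg fcl])
  show "orbit (f \<circ> transpose a b) a = orbit f a \<union> orbit f b"
    using s1 s2 s3 unfolding g_def by auto
  assume z: "z \<notin> orbit f a \<union> orbit f b"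
  have "orbit f z = orbit g z"
  proof (rule orbit_cong0)
    show "z \<in> orbit f z" by (rule permutation_self_in_orbit[OF pf])
    show "f \<in> orbit f z \<rightarrow> orbit f z" using orbit.step[of _ f z] by auto
    show "\<And>y. y \<in> orbit f z \<Longrightarrow> f y = g y"
    proof -
      fix y assume y: "y \<in> orbit f z"
      have "y \<noteq> a"
      proof
        assume "y = a"
        then have "orbit f a = orbit f z" using orbit_cl[OF pf y] by simp
        then show False using z permutation_self_in_orbit[OF pf, of z] by auto
      qed
      moreover have "y \<noteq> b"
      proof
        assume "y = b"
        then have "orbit f b = orbit f z" using orbit_cl[OF pf y] by simp
        then show False using z permutation_self_in_orbit[OF pf, of z] by auto
      qed
      ultimately show "f y = g y" unfolding g_def by simp
    qed
  qed
  then show "orbit (f \<circ> transpose a b) z = orbit f z" unfolding g_def by simp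
qed

lemma cyc_orbit: "permutation p \<Longrightarrow> cyc p x = orbit p x"
  unfolding cyc_def by (simp add: orbit_altdef_permutation)

lemma perm_n: "f permutes {1..(n::nat)} \<Longrightarrow> permutation f"
  using permutation_permutes by blast

lemma ncycles_orb: "f permutes {1..(n::nat)} \<Longrightarrow> ncycles n f = card ((\<lambda>x. orbit f x) ` {1..n})"
proof -
  assume "f permutes {1..(n::nat)}"
  then have "{cyc f x | x. x \<in> {1..n}} = (\<lambda>x. orbit f x) ` {1..n}"
    using cyc_orbit[OF perm_n] by auto
  then show ?thesis unfolding ncycles_def by simp
qed

lemma ncycles_le: "f permutes {1..(n::nat)} \<Longrightarrow> ncycles n f \<le> n"
  using ncycles_orb card_image_le[of "{1..n}" "\<lambda>x. orbit f x"] by simp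

lemma merge_card:
  assumes fp: "f permutes {1..(n::nat)}" and ab: "a \<noteq> b" "a \<in> {1..n}" "b \<in> {1..n}"
    and nb: "b \<notin> orbit f a"
  shows "card ((\<lambda>x. orbit (f \<circ> transpose a b) x) ` {1..n}) + 1 = card ((\<lambda>x. orbit f x) ` {1..n})"
proof -
  have pf: "permutation f" using perm_n[OF fp] .
  define g where "g = f \<circ> transpose a b"
  define Oa where "Oa = orbit f a"
  define Ob where "Ob = orbit f b"
  define A where "A = (\<lambda>x. orbit f x) ` {1..n}"
  have ga: "orbit g a = Oa \<union> Ob" unfolding g_def Oa_def Ob_def by (rule merge_orbit(1)[OF pf ab(1) nb])
  have pg: "permutation g" unfolding g_def by (intro permutation_compose pf permutation_swap_id)
  have eq: "(\<lambda>x. orbit g x) ` {1..n} = insert (Oa \<union> Ob) (A - {Oa, Ob})"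
  proof (intro set_eqI iffI)
    fix X assume "X \<in> (\<lambda>x. orbit g x) ` {1..n}"
    then obtain x where x: "x \<in> {1..n}" "X = orbit g x" by blast
    show "X \<in> insert (Oa \<union> Ob) (A - {Oa, Ob})"
    proof (cases "x \<in> Oa \<union> Ob")
      case True
      then have "x \<in> orbit g a" using ga by simp
      then have "orbit g x = orbit g a" using orbit_cl[OF pg] by blast
      then have "X = Oa \<union> Ob" using x ga by simp
      then show ?thesis by simp
    next
      case False
      then have e: "orbit g x = orbit f x" unfolding g_def Oa_def Ob_def by (rule merge_orbit(2)[OF pf ab(1) nb])
      have xx: "x \<in> orbit f x" by (rule permutation_self_in_orbit[OF pf])
      have "orbit f x \<noteq> Oa" "orbit f x \<noteq> Ob" using False xx by blast+
      moreover have "orbit f x \<in> A" unfolding A_def using x(1) by blast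
      ultimately show ?thesis using x(2) e by simp
    qed
  next
    fix X assume X: "X \<in> insert (Oa \<union> Ob) (A - {Oa, Ob})"
    show "X \<in> (\<lambda>x. orbit g x) ` {1..n}"
    proof (cases "X = Oa \<union> Ob")
      case True then show ?thesis using ga ab(2) by (metis image_eqI)
    next
      case False
      then have XA: "X \<in> A" "X \<noteq> Oa" "X \<noteq> Ob" using X by blast+
      then obtain x where x1: "x \<in> {1..n}" "X = orbit f x" unfolding A_def by blast
      have "x \<notin> Oa"
      proof
        assume "x \<in> Oa" then have "orbit f x = Oa" unfolding Oa_def using orbit_cl[OF pf] by blast
        then show False using XA x1 by simp
      qed
      moreover have "x \<notin> Ob"
      proof
        assume "x \<in> Ob" then have "orbit f x = Ob" unfolding Ob_def using orbit_cl[OF pf] by blast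
        then show False using XA x1 by simp
      qed
      ultimately have "x \<notin> Oa \<union> Ob" by blast
      then have "orbit g x = orbit f x" unfolding g_def Oa_def Ob_def by (rule merge_orbit(2)[OF pf ab(1) nb])
      then show ?thesis using x1 by (metis image_eqI)
    qed
  qed
  have nin: "Oa \<union> Ob \<notin> A - {Oa, Ob}"
  proof
    assume "Oa \<union> Ob \<in> A - {Oa, Ob}"
    then have XA: "Oa \<union> Ob \<in> A" "Oa \<union> Ob \<noteq> Oa" "Oa \<union> Ob \<noteq> Ob" by blast+
    then obtain x where x1: "Oa \<union> Ob = orbit f x" unfolding A_def by blast
    have x: "Oa \<union> Ob = orbit f x" "orbit f x \<noteq> Oa" "orbit f x \<noteq> Ob" using x1 XA by simp_all
    have "x \<in> Oa \<union> Ob" using x(1) permutation_self_in_orbit[OF pf, of x] by simp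
    then have "x \<in> orbit f a \<or> x \<in> orbit f b" unfolding Oa_def Ob_def by blast
    then have "orbit f x = Oa \<or> orbit f x = Ob" unfolding Oa_def Ob_def using orbit_cl[OF pf] by blast
    then show False using x by blast
  qed
  have "Oa \<noteq> Ob" using nb permutation_self_in_orbit[OF pf, of b] unfolding Oa_def Ob_def by blast
  moreover have "Oa \<in> A" "Ob \<in> A" unfolding A_def Oa_def Ob_def using ab by blast+
  moreover have "finite A" unfolding A_def by simp
  ultimately have c2: "card {Oa, Ob} = 2" and sub: "{Oa, Ob} \<subseteq> A" and fA: "finite A" by auto
  have "card (A - {Oa, Ob}) = card A - 2" using card_Diff_subset[OF _ sub] c2 by simp
  moreover have "card {Oa, Ob} \<le> card A" using card_mono[OF fA sub] .
  ultimately have c: "card (A - {Oa, Ob}) + 2 = card A" using c2 by simp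
  have "card ((\<lambda>x. orbit g x) ` {1..n}) = Suc (card (A - {Oa, Ob}))" unfolding eq using nin fA by simp
  then show ?thesis using c unfolding A_def g_def by simp
qed


lemma perm_comp_t: "f permutes {1..(n::nat)} \<Longrightarrow> a \<in> {1..n} \<Longrightarrow> b \<in> {1..n} \<Longrightarrow> f \<circ> transpose a b permutes {1..n}"
  by (rule permutes_compose[OF permutes_swap_id]) auto

lemma ncycles_ge1: "f permutes {1..(n::nat)} \<Longrightarrow> n \<ge> 1 \<Longrightarrow> ncycles n f \<ge> 1"
  unfolding ncycles_orb by (simp add: card_gt_0_iff Suc_le_eq)

lemma step_merge:
  assumes fp: "f permutes {1..(n::nat)}" and ab: "a \<noteq> b" "a \<in> {1..n}" "b \<in> {1..n}"
    and nb: "b \<notin> orbit f a"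
  shows "plen n (f \<circ> transpose a b) = plen n f + 1"
proof -
  have gp: "f \<circ> transpose a b permutes {1..n}" using perm_comp_t[OF fp ab(2,3)] .
  have "ncycles n (f \<circ> transpose a b) + 1 = ncycles n f"
    unfolding ncycles_orb[OF fp] ncycles_orb[OF gp] by (rule merge_card[OF fp ab nb])
  moreover have "ncycles n f \<le> n" by (rule ncycles_le[OF fp])
  ultimately show ?thesis unfolding plen_def by simp
qed

lemma step_split:
  assumes fp: "f permutes {1..(n::nat)}" and ab: "a \<noteq> b" "a \<in> {1..n}" "b \<in> {1..n}"
    and bi: "b \<in> orbit f a"
  shows "plen n f = plen n (f \<circ> transpose a b) + 1"
proof -
  define g where "g = f \<circ> transpose a b"
  have gp: "g permutes {1..n}" unfolding g_def using perm_comp_t[OF fp ab(2,3)] .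
  have nb: "b \<notin> orbit g a" unfolding g_def by (rule split_notin[OF perm_n[OF fp] ab(1) bi])
  have "g \<circ> transpose a b = f" unfolding g_def by (simp add: o_assoc[symmetric])
  then show ?thesis using step_merge[OF gp ab nb] unfolding g_def by simp
qed

lemma step_le:
  assumes fp: "f permutes {1..(n::nat)}" and ab: "a \<noteq> b" "a \<in> {1..n}" "b \<in> {1..n}"
  shows "plen n (f \<circ> transpose a b) \<le> plen n f + 1"
  using step_merge[OF assms] step_split[OF assms] by (cases "b \<in> orbit f a") auto

lemma plen0_id:
  assumes fp: "f permutes {1..(n::nat)}" and p0: "plen n f = 0"
  shows "f = id"
proof -
  have pf: "permutation f" using perm_n[OF fp] .
  have "ncycles n f = n" using p0 ncycles_le[OF fp] unfolding plen_def by simp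
  then have "card ((\<lambda>x. orbit f x) ` {1..n}) = card {1..n}" using ncycles_orb[OF fp] by simp
  then have inj: "inj_on (\<lambda>x. orbit f x) {1..n}" using eq_card_imp_inj_on[of "{1..n}" "\<lambda>x. orbit f x"] by simp
  show ?thesis
  proof
    fix x show "f x = id x"
    proof (cases "x \<in> {1..n}")
      case True
      then have "f x \<in> {1..n}" using permutes_in_image[OF fp] by simp
      moreover have "orbit f (f x) = orbit f x" by (rule permutation_orbit_step[OF pf])
      ultimately have "f x = x" using inj_onD[OF inj _ _ True] by blast
      then show ?thesis by simp
    next
      case False then show ?thesis using permutes_not_in[OF fp] by simp
    qed
  qed
qed

lemma plen_id: "plen n id = 0"
proof -
  have "(\<lambda>x. orbit id x) ` {1..n} = (\<lambda>x. {x}) ` {1..n}"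
    by (intro image_cong) (simp_all add: orbit_eq_singleton_iff)
  moreover have "card ((\<lambda>x. {x}) ` {1..n}) = n" by (subst card_image) (auto intro: inj_onI)
  moreover have "id permutes {1..n}" by (rule permutes_id)
  ultimately show ?thesis unfolding plen_def using ncycles_orb by simp
qed

lemma triangle_aux:
  "\<forall>\<rho> \<sigma>. \<rho> permutes {1..(n::nat)} \<longrightarrow> \<sigma> permutes {1..n} \<longrightarrow> plen n \<rho> = m
     \<longrightarrow> plen n (\<sigma> \<circ> \<rho>) \<le> plen n \<sigma> + m"
proof (induction m)
  case 0 then show ?case using plen0_id by fastforce
next
  case (Suc m)
  show ?case
  proof (intro allI impI)
    fix \<rho> \<sigma> assume rp: "\<rho> permutes {1..n}" and sp: "\<sigma> permutes {1..n}" and pl: "plen n \<rho> = Suc m"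
    have "\<rho> \<noteq> id" using pl plen_id by auto
    then obtain a where a: "\<rho> a \<noteq> a" by (metis eq_id_iff)
    then have a1: "a \<in> {1..n}" using permutes_not_in[OF rp] by blast
    define b where "b = \<rho> a"
    have b1: "b \<in> {1..n}" unfolding b_def using permutes_in_image[OF rp] a1 by simp
    have ab: "a \<noteq> b" using a unfolding b_def by simp
    have bi: "b \<in> orbit \<rho> a" unfolding b_def by (rule orbit.base)
    define \<rho>' where "\<rho>' = \<rho> \<circ> transpose a b"
    have rp': "\<rho>' permutes {1..n}" unfolding \<rho>'_def by (rule perm_comp_t[OF rp a1 b1])
    have "plen n \<rho>' = m" using step_split[OF rp ab a1 b1 bi] pl unfolding \<rho>'_def by simp
    then have ih: "plen n (\<sigma> \<circ> \<rho>') \<le> plen n \<sigma> + m" using Suc.IH rp' sp by blast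
    have "\<sigma> \<circ> \<rho> = (\<sigma> \<circ> \<rho>') \<circ> transpose a b" unfolding \<rho>'_def by (simp add: o_assoc[symmetric])
    moreover have "(\<sigma> \<circ> \<rho>') permutes {1..n}" by (rule permutes_compose[OF rp' sp])
    ultimately have "plen n (\<sigma> \<circ> \<rho>) \<le> plen n (\<sigma> \<circ> \<rho>') + 1" using step_le ab a1 b1 by simp
    then show "plen n (\<sigma> \<circ> \<rho>) \<le> plen n \<sigma> + Suc m" using ih by simp
  qed
qed

lemma triangle:
  "\<rho> permutes {1..(n::nat)} \<Longrightarrow> \<sigma> permutes {1..n} \<Longrightarrow> plen n (\<sigma> \<circ> \<rho>) \<le> plen n \<sigma> + plen n \<rho>"
  using triangle_aux by blast

definition cd :: "nat \<Rightarrow> nat \<Rightarrow> nat \<Rightarrow> nat" where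
  "cd n x y = (if x \<le> y then y - x else n + y - x)"

definition btw :: "nat \<Rightarrow> nat \<Rightarrow> nat \<Rightarrow> nat \<Rightarrow> bool" where
  "btw n x y z \<longleftrightarrow> 1 \<le> y \<and> y \<le> n \<and> (if x < z then x < y \<and> y < z else if z < x then x < y \<or> y < z else y \<noteq> x)"

definition NCp :: "nat \<Rightarrow> (nat \<Rightarrow> nat) \<Rightarrow> bool" where
  "NCp n f \<longleftrightarrow> (\<forall>x\<in>{1..n}. \<forall>y. btw n x y (f x) \<longrightarrow> btw n x (f y) (f x))"

lemma A1: "a \<in> {1..n} \<Longrightarrow> s \<in> {1..n} \<Longrightarrow> w \<in> {1..n} \<Longrightarrow> w \<noteq> a \<Longrightarrow> w \<noteq> s \<Longrightarrow> s \<noteq> a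
  \<Longrightarrow> \<not> btw n a s w \<Longrightarrow> btw n a w s"
  unfolding btw_def by (auto split: if_split_asm)


lemma A2: "v \<in> {1..n} \<Longrightarrow> a \<in> {1..n} \<Longrightarrow> v \<noteq> a \<Longrightarrow> btw n a v a"
  unfolding btw_def by (auto split: if_split_asm)

lemma A3: "a \<in> {1..n} \<Longrightarrow> b \<in> {1..n} \<Longrightarrow> s \<in> {1..n} \<Longrightarrow> a \<noteq> b \<Longrightarrow> a \<noteq> s \<Longrightarrow> b \<noteq> s
  \<Longrightarrow> \<not> btw n b a s \<Longrightarrow> btw n a b s"
  unfolding btw_def by (auto split: if_split_asm)

lemma A4: "a \<in> {1..n} \<Longrightarrow> b \<in> {1..n} \<Longrightarrow> s \<in> {1..n} \<Longrightarrow> btw n a b s \<Longrightarrow> btw n b v s \<Longrightarrow> btw n a v s"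
  unfolding btw_def by (auto split: if_split_asm)

lemma A5: "a \<in> {1..n} \<Longrightarrow> b \<in> {1..n} \<Longrightarrow> s \<in> {1..n} \<Longrightarrow> btw n a y s \<Longrightarrow> y \<noteq> b \<Longrightarrow> \<not> btw n b y s
  \<Longrightarrow> btw n a b s \<Longrightarrow> btw n a y b"
  unfolding btw_def by (auto split: if_split_asm)

lemma A6: "a \<in> {1..n} \<Longrightarrow> b \<in> {1..n} \<Longrightarrow> s \<in> {1..n} \<Longrightarrow> v \<in> {1..n} \<Longrightarrow> btw n a y b
  \<Longrightarrow> \<not> btw n y b v \<Longrightarrow> v \<noteq> y \<Longrightarrow> btw n a b s \<Longrightarrow> btw n a v s"
  unfolding btw_def by (auto split: if_split_asm)

lemma A7: "a \<in> {1..n} \<Longrightarrow> b \<in> {1..n} \<Longrightarrow> s \<in> {1..n} \<Longrightarrow> z \<in> {1..n} \<Longrightarrow> w \<in> {1..n}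
  \<Longrightarrow> btw n a y b \<Longrightarrow> btw n z y w \<Longrightarrow> btw n z v w \<Longrightarrow> \<not> btw n z a w \<Longrightarrow> \<not> btw n z b w
  \<Longrightarrow> a \<noteq> b \<Longrightarrow> btw n a b s \<Longrightarrow> btw n a v s"
  unfolding btw_def by (auto split: if_split_asm)

lemma A8: "z \<in> {1..n} \<Longrightarrow> w \<in> {1..n} \<Longrightarrow> y \<in> {1..n} \<Longrightarrow> z \<noteq> w \<Longrightarrow> w \<noteq> y \<Longrightarrow> z \<noteq> y
  \<Longrightarrow> cd n z w \<le> cd n z y \<Longrightarrow> cd n w y < cd n z y"
  unfolding cd_def by (auto split: if_split_asm)

lemma btw_cd: "x \<in> {1..n} \<Longrightarrow> y \<in> {1..n} \<Longrightarrow> z \<in> {1..n} \<Longrightarrow>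
   btw n x y z \<longleftrightarrow> 0 < cd n x y \<and> (x = z \<or> cd n x y < cd n x z)"
  unfolding btw_def cd_def by (simp split: if_split_asm) linarith?


lemma btw_in: "btw n x y z \<Longrightarrow> y \<in> {1..n}" unfolding btw_def by simp
lemma btw_neq: "btw n x y z \<Longrightarrow> y \<noteq> x" unfolding btw_def by (auto split: if_split_asm)

lemma orbit_in:
  assumes "f permutes {1..(n::nat)}" "x \<in> {1..n}" "y \<in> orbit f x" shows "y \<in> {1..n}"
  using permutes_orbit_subset[OF assms(1,2)] assms(3) by blast

lemma NC_Q:
  assumes fp: "f permutes {1..(n::nat)}" and nc: "NCp n f" and x: "x \<in> {1..n}" and z: "z \<in> orbit f x"
  shows "\<not> btw n x z (f x)"
proof -
  define I where "I = {y. btw n x y (f x)}"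
  have Isub: "I \<subseteq> {1..n}" unfolding I_def using btw_in by blast
  have fI: "finite I" using finite_subset[OF Isub] by simp
  have im: "f ` I \<subseteq> I" unfolding I_def using nc x unfolding NCp_def by blast
  have injI: "inj_on f I" using permutes_inj_on[OF fp] .
  have eqI: "f ` I = I" by (rule endo_inj_surj[OF fI im injI])
  define J where "J = {1..n} - I"
  have xJ: "x \<in> J" unfolding J_def I_def using x btw_neq by blast
  have cl: "\<forall>y\<in>J. f y \<in> J"
  proof
    fix y assume y: "y \<in> J"
    have "f y \<in> {1..n}" using permutes_in_image[OF fp] y unfolding J_def by auto
    moreover have "f y \<notin> I"
    proof
      assume "f y \<in> I"
      then obtain y' where "y' \<in> I" "f y' = f y" using eqI by (metis imageE)
      then have "y' = y" using permutes_inj[OF fp] unfolding inj_def by blast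
      then show False using y \<open>y' \<in> I\<close> unfolding J_def by blast
    qed
    ultimately show "f y \<in> J" unfolding J_def by blast
  qed
  have "orbit f x \<subseteq> J" by (rule orbit_least[OF xJ cl])
  then show ?thesis using z unfolding J_def I_def by blast
qed

lemma NC_arc:
  assumes nc: "NCp n f" and x: "x \<in> {1..n}" and y: "btw n x y (f x)"
  shows "orbit f y \<subseteq> {w. btw n x w (f x)}"
proof (rule orbit_least)
  show "y \<in> {w. btw n x w (f x)}" using y by simp
  show "\<forall>z\<in>{w. btw n x w (f x)}. f z \<in> {w. btw n x w (f x)}" using nc x unfolding NCp_def by blast
qed

lemma gap:
  assumes fp: "f permutes {1..(n::nat)}" and x: "x \<in> {1..n}" and y: "y \<in> {1..n}" and ny: "y \<notin> orbit f x"
  shows "\<exists>z\<in>orbit f x. btw n z y (f z)"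
proof -
  have pf: "permutation f" using perm_n[OF fp] .
  have "x \<in> orbit f x" by (rule permutation_self_in_orbit[OF pf])
  then obtain z where z: "z \<in> orbit f x" and zmin: "\<And>w. w \<in> orbit f x \<Longrightarrow> cd n z y \<le> cd n w y"
    using ex_has_least_nat[of "\<lambda>w. w \<in> orbit f x" x "\<lambda>w. cd n w y"] by blast
  have z1: "z \<in> {1..n}" using orbit_in[OF fp x z] .
  have fz: "f z \<in> orbit f x" using orbit.step[OF z] .
  have fz1: "f z \<in> {1..n}" using orbit_in[OF fp x fz] .
  have zy: "z \<noteq> y" using z ny by blast
  have fzy: "f z \<noteq> y" using fz ny by blast
  show ?thesis
  proof (rule bexI[OF _ z])
    show "btw n z y (f z)"
    proof (cases "f z = z")
      case True then show ?thesis using A2[OF y z1 zy[symmetric]] by simp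
    next
      case False
      show ?thesis
      proof (rule ccontr)
        assume nb: "\<not> btw n z y (f z)"
        have "0 < cd n z y" using zy y z1 unfolding cd_def by auto
        then have "cd n z (f z) \<le> cd n z y" using nb btw_cd[OF z1 y fz1] False by auto
        then have "cd n (f z) y < cd n z y" using A8[OF z1 fz1 y] False[symmetric] fzy zy by blast
        then show False using zmin[OF fz] by simp
      qed
    qed
  qed
qed


lemma SA:
  assumes fp: "f permutes {1..(n::nat)}" and nc: "NCp n f" and ab: "a \<noteq> b" "a \<in> {1..n}" "b \<in> {1..n}"
    and bi: "b \<in> orbit f a" and y: "btw n a y (f b)"
  shows "btw n a ((f \<circ> transpose a b) y) (f b)"
proof -
  have pf: "permutation f" using perm_n[OF fp] .
  define s where "s = f b"
  have ai: "a \<in> orbit f b" using orbit_swap[OF permutation_self_in_orbit[OF pf] bi] .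
  have so: "s \<in> orbit f a" unfolding s_def using orbit.step[OF bi] .
  have s1: "s \<in> {1..n}" using orbit_in[OF fp ab(2) so] .
  have fa1: "f a \<in> {1..n}" using permutes_in_image[OF fp] ab(2) by simp
  have injf: "inj f" using permutes_inj[OF fp] .
  have faa: "f a \<noteq> a"
  proof
    assume "f a = a" then have "orbit f a = {a}" using orbit_eq_singleton_iff by metis
    then show False using bi ab by simp
  qed
  have sb: "s \<noteq> b"
  proof
    assume "s = b" then have "f b = b" unfolding s_def .
    then have "orbit f b = {b}" using orbit_eq_singleton_iff by metis
    then show False using ai ab by simp
  qed
  have fas: "f a \<noteq> s" unfolding s_def using injf ab unfolding inj_def by blast
  have y1: "y \<in> {1..n}" using btw_in[OF y] .
  have ya: "y \<noteq> a" using btw_neq[OF y] .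
  show ?thesis
  proof (cases "y = b")
    case True
    then have e: "(f \<circ> transpose a b) y = f a" by simp
    show ?thesis
    proof (cases "s = a")
      case True then show ?thesis unfolding e s_def[symmetric] using A2[OF fa1 ab(2) faa] by simp
    next
      case False
      have "\<not> btw n a s (f a)" by (rule NC_Q[OF fp nc ab(2) so])
      then show ?thesis unfolding e s_def[symmetric] using A1[OF ab(2) s1 fa1 faa fas False] by simp
    qed
  next
    case False note yb = False
    define v where "v = f y"
    have e: "(f \<circ> transpose a b) y = v" unfolding v_def using yb ya by simp
    have v1: "v \<in> {1..n}" unfolding v_def using permutes_in_image[OF fp] y1 by simp
    have y': "btw n a y s" using y unfolding s_def .
    show ?thesis unfolding e s_def[symmetric]
    proof (cases "s = a")
      case True
      have "v \<noteq> a" unfolding v_def using True yb injf unfolding s_def inj_def by metis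
      then show "btw n a v s" using True A2[OF v1 ab(2)] by simp
    next
      case False note sa = False
      have "\<not> btw n b a (f b)" by (rule NC_Q[OF fp nc ab(3) ai])
      then have abs: "btw n a b s" using A3[OF ab(2,3) s1 ab(1)] False sb unfolding s_def by metis
      show "btw n a v s"
      proof (cases "btw n b y s")
        case True
        then have "btw n b v s" using nc ab(3) unfolding NCp_def s_def v_def by blast
        then show ?thesis using A4[OF ab(2,3) s1 abs] by blast
      next
        case False
        have ayb: "btw n a y b" using A5[OF ab(2,3) s1 y' yb False abs] .
        show ?thesis
        proof (cases "y \<in> orbit f a")
          case True
          have oy: "orbit f y = orbit f a" using orbit_cl[OF pf True] .
          have "b \<in> orbit f y" using oy bi by simp
          then have nb: "\<not> btw n y b v" unfolding v_def by (rule NC_Q[OF fp nc y1])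
          have "v \<noteq> y"
          proof
            assume "v = y" then have "orbit f y = {y}" unfolding v_def using orbit_eq_singleton_iff by metis
            then show False using oy permutation_self_in_orbit[OF pf, of a] ya by auto
          qed
          then show ?thesis using A6[OF ab(2,3) s1 v1 ayb nb _ abs] by blast
        next
          case False
          obtain z where z: "z \<in> orbit f a" "btw n z y (f z)" using gap[OF fp ab(2) y1 False] by blast
          have z1: "z \<in> {1..n}" using orbit_in[OF fp ab(2) z(1)] .
          have w1: "f z \<in> {1..n}" using permutes_in_image[OF fp] z1 by simp
          have "btw n z v (f z)" using nc z1 z(2) unfolding NCp_def v_def by blast
          moreover have oz: "orbit f z = orbit f a" using orbit_cl[OF pf z(1)] .
          have "\<not> btw n z a (f z)" by (rule NC_Q[OF fp nc z1]) (simp add: oz permutation_self_in_orbit[OF pf])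
          moreover have "\<not> btw n z b (f z)" by (rule NC_Q[OF fp nc z1]) (simp add: oz bi)
          ultimately show ?thesis using A7[OF ab(2,3) s1 z1 w1 ayb z(2)] ab(1) abs by blast
        qed
      qed
    qed
  qed
qed

lemma S_split:
  assumes fp: "f permutes {1..(n::nat)}" and nc: "NCp n f" and ab: "a \<noteq> b" "a \<in> {1..n}" "b \<in> {1..n}"
    and bi: "b \<in> orbit f a"
  shows "NCp n (f \<circ> transpose a b)"
  unfolding NCp_def
proof (intro ballI allI impI)
  have pf: "permutation f" using perm_n[OF fp] .
  have ai: "a \<in> orbit f b" using orbit_swap[OF permutation_self_in_orbit[OF pf] bi] .
  define g where "g = f \<circ> transpose a b"
  fix x y assume x: "x \<in> {1..n}" and y: "btw n x y ((f \<circ> transpose a b) x)"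
  show "btw n x ((f \<circ> transpose a b) y) ((f \<circ> transpose a b) x)"
  proof (cases "x = a")
    case True
    then show ?thesis using SA[OF fp nc ab bi] y by simp
  next
    case xa: False
    show ?thesis
    proof (cases "x = b")
      case True
      have eq: "f \<circ> transpose a b = f \<circ> transpose b a" by (simp add: transpose_commute)
      show ?thesis using SA[OF fp nc ab(1)[symmetric] ab(3,2) ai] y True unfolding eq by simp
    next
      case xb: False
      have gx: "(f \<circ> transpose a b) x = f x" using xa xb by simp
      have y': "btw n x y (f x)" using y gx by simp
      have arc: "orbit f y \<subseteq> {w. btw n x w (f x)}" by (rule NC_arc[OF nc x y'])
      have "btw n x ((f \<circ> transpose a b) y) (f x)"
      proof (cases "y = a")
        case True
        have "b \<in> orbit f y" using bi True by simp
        then have "f b \<in> orbit f y" using orbit.step by metis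
        then show ?thesis using arc True by auto
      next
        case ya: False
        show ?thesis
        proof (cases "y = b")
          case True
          have "a \<in> orbit f y" using ai True by simp
          then have "f a \<in> orbit f y" using orbit.step by metis
          then show ?thesis using arc True by auto
        next
          case False
          then show ?thesis using ya nc x y' unfolding NCp_def by simp
        qed
      qed
      then show ?thesis using gx by simp
    qed
  qed
qed


lemma longcyc_permutes:
  assumes n: "n \<ge> 1" shows "longcyc n permutes {1..n}"
proof (rule bij_imp_permutes)
  have inj: "inj_on (longcyc n) {1..n}"
    by (rule inj_onI) (auto simp: longcyc_def split: if_split_asm)
  have im: "longcyc n ` {1..n} \<subseteq> {1..n}" using n by (auto simp: longcyc_def)
  have "longcyc n ` {1..n} = {1..n}" by (rule endo_inj_surj[OF _ im inj]) simp
  then show "bij_betw (longcyc n) {1..n} {1..n}" using inj unfolding bij_betw_def by simp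
  show "\<And>x. x \<notin> {1..n} \<Longrightarrow> longcyc n x = x" using n by (auto simp: longcyc_def)
qed

lemma NC_longcyc: "NCp n (longcyc n)"
  unfolding NCp_def btw_def longcyc_def by (auto split: if_split_asm)

lemma E_aux:
  assumes n: "n \<ge> 1"
  shows "\<forall>\<sigma>. \<sigma> permutes {1..n} \<longrightarrow> plen n (inv \<sigma> \<circ> longcyc n) = d
           \<longrightarrow> plen n (longcyc n) = plen n \<sigma> + d \<longrightarrow> NCp n \<sigma>"
proof (induction d)
  case 0
  show ?case
  proof (intro allI impI)
    fix \<sigma> assume sp: "\<sigma> permutes {1..n}" and p0: "plen n (inv \<sigma> \<circ> longcyc n) = 0"
    have dp: "inv \<sigma> \<circ> longcyc n permutes {1..n}"
      by (rule permutes_compose[OF longcyc_permutes[OF n] permutes_inv[OF sp]])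
    have "inv \<sigma> \<circ> longcyc n = id" by (rule plen0_id[OF dp p0])
    then have "\<sigma> \<circ> (inv \<sigma> \<circ> longcyc n) = \<sigma>" by simp
    then have "longcyc n = \<sigma>" using permutes_inv_o(1)[OF sp] by (simp add: o_assoc)
    then show "NCp n \<sigma>" using NC_longcyc by metis
  qed
next
  case (Suc d)
  show ?case
  proof (intro allI impI)
    fix \<sigma> assume sp: "\<sigma> permutes {1..n}" and pd: "plen n (inv \<sigma> \<circ> longcyc n) = Suc d"
      and pc: "plen n (longcyc n) = plen n \<sigma> + Suc d"
    define \<delta> where "\<delta> = inv \<sigma> \<circ> longcyc n"
    have dp: "\<delta> permutes {1..n}" unfolding \<delta>_def
      by (rule permutes_compose[OF longcyc_permutes[OF n] permutes_inv[OF sp]])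
    have "\<delta> \<noteq> id" using pd plen_id unfolding \<delta>_def by auto
    then obtain u where u: "\<delta> u \<noteq> u" by (metis eq_id_iff)
    then have u1: "u \<in> {1..n}" using permutes_not_in[OF dp] by blast
    define v where "v = \<delta> u"
    have v1: "v \<in> {1..n}" unfolding v_def using permutes_in_image[OF dp] u1 by simp
    have uv: "u \<noteq> v" using u unfolding v_def by simp
    define a where "a = \<delta> u"
    define b where "b = \<delta> v"
    have a1: "a \<in> {1..n}" unfolding a_def using permutes_in_image[OF dp] u1 by simp
    have b1: "b \<in> {1..n}" unfolding b_def using permutes_in_image[OF dp] v1 by simp
    have ab: "a \<noteq> b" unfolding a_def b_def using uv permutes_inj[OF dp] unfolding inj_def by blast
    define \<delta>' where "\<delta>' = \<delta> \<circ> transpose u v"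
    have "v \<in> orbit \<delta> u" unfolding v_def by (rule orbit.base)
    then have pd': "plen n \<delta>' = d" using step_split[OF dp uv u1 v1] pd unfolding \<delta>'_def \<delta>_def by simp
    define \<sigma>' where "\<sigma>' = \<sigma> \<circ> transpose a b"
    have sp': "\<sigma>' permutes {1..n}" unfolding \<sigma>'_def by (rule perm_comp_t[OF sp a1 b1])
    have bijs: "bij \<sigma>" using permutes_bij[OF sp] .
    have bijd: "bij \<delta>" using permutes_bij[OF dp] .
    have "inv \<sigma>' = transpose a b \<circ> inv \<sigma>" unfolding \<sigma>'_def
      by (simp add: o_inv_distrib[OF bijs bij_transpose])
    then have "inv \<sigma>' \<circ> longcyc n = transpose a b \<circ> \<delta>" unfolding \<delta>_def by (simp add: o_assoc)
    also have "\<dots> = \<delta> \<circ> transpose (inv \<delta> a) (inv \<delta> b)" by (rule transpose_comp_eq[OF bijd])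
    also have "\<dots> = \<delta>'" unfolding \<delta>'_def a_def b_def using permutes_inverses(2)[OF dp] by simp
    finally have id': "inv \<sigma>' \<circ> longcyc n = \<delta>'" .
    have dp': "\<delta>' permutes {1..n}" unfolding \<delta>'_def by (rule perm_comp_t[OF dp u1 v1])
    show "NCp n \<sigma>"
    proof (cases "b \<in> orbit \<sigma> a")
      case False
      have "plen n \<sigma>' = plen n \<sigma> + 1" unfolding \<sigma>'_def by (rule step_merge[OF sp ab a1 b1 False])
      then have pc': "plen n (longcyc n) = plen n \<sigma>' + d" using pc by simp
      have "NCp n \<sigma>'" using Suc.IH sp' id' pd' pc' by blast
      moreover have "b \<in> orbit \<sigma>' a" unfolding \<sigma>'_def by (rule merge_in[OF perm_n[OF sp] ab False])
      ultimately have "NCp n (\<sigma>' \<circ> transpose a b)" using S_split[OF sp' _ ab a1 b1] by blast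
      moreover have "\<sigma>' \<circ> transpose a b = \<sigma>" unfolding \<sigma>'_def by (simp add: o_assoc[symmetric])
      ultimately show ?thesis by simp
    next
      case True
      have p1: "plen n \<sigma> = plen n \<sigma>' + 1" unfolding \<sigma>'_def by (rule step_split[OF sp ab a1 b1 True])
      have "\<sigma>' \<circ> \<delta>' = longcyc n" unfolding id'[symmetric] using permutes_inv_o(1)[OF sp'] by (simp add: o_assoc)
      then have "plen n (longcyc n) \<le> plen n \<sigma>' + plen n \<delta>'" using triangle[OF dp' sp'] by simp
      then show ?thesis using p1 pd' pc by simp
    qed
  qed
qed

lemma E:
  assumes "n \<ge> 1" "\<sigma> permutes {1..n}" "pleq n \<sigma> (longcyc n)"
  shows "NCp n \<sigma>"
  using E_aux[OF assms(1)] assms(2,3) unfolding pleq_def by blast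


lemma foldr_comp:
  "foldr (\<lambda>t acc. transpose (fst t) (snd t) \<circ> acc) xs h = foldr (\<lambda>t acc. transpose (fst t) (snd t) \<circ> acc) xs id \<circ> h"
  by (induction xs) (simp_all add: o_assoc)

lemma gpref_0: "gpref g 0 = id" unfolding gpref_def tprod_def by simp

lemma gpref_Suc:
  assumes "m < length g"
  shows "gpref g (Suc m) = gpref g m \<circ> transpose (fst (g!m)) (snd (g!m))"
proof -
  have "take (Suc m) g = take m g @ [g!m]" using assms by (simp add: take_Suc_conv_app_nth)
  then show ?thesis unfolding gpref_def tprod_def by (simp add: foldr_comp[of _ "transpose _ _"])
qed

lemma vt_props:
  assumes "\<forall>t\<in>set g. valid_transp n t" "m < length g"
  shows "fst (g!m) \<noteq> snd (g!m)" "fst (g!m) \<in> {1..n}" "snd (g!m) \<in> {1..n}" "fst (g!m) < snd (g!m)"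
proof -
  have "valid_transp n (g!m)" using assms nth_mem by blast
  then show "fst (g!m) \<noteq> snd (g!m)" "fst (g!m) \<in> {1..n}" "snd (g!m) \<in> {1..n}" "fst (g!m) < snd (g!m)"
    unfolding valid_transp_def by auto
qed

lemma gpref_perm:
  assumes vt: "\<forall>t\<in>set g. valid_transp n t"
  shows "m \<le> length g \<Longrightarrow> gpref g m permutes {1..n}"
proof (induction m)
  case 0 show ?case unfolding gpref_0 by (rule permutes_id)
next
  case (Suc m)
  then have "m < length g" "gpref g m permutes {1..n}" by simp_all
  then show ?case unfolding gpref_Suc[OF \<open>m < length g\<close>]
    by (intro perm_comp_t) (use vt_props[OF vt, of m] in simp_all)
qed

lemma gp_le:
  assumes vt: "\<forall>t\<in>set g. valid_transp n t"
  shows "m' \<le> m'' \<Longrightarrow> m'' \<le> length g \<Longrightarrow> plen n (gpref g m'') \<le> plen n (gpref g m') + (m'' - m')"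
proof (induction m'')
  case 0 then show ?case by simp
next
  case (Suc m)
  show ?case
  proof (cases "m' = Suc m")
    case True then show ?thesis by simp
  next
    case False
    then have ih: "plen n (gpref g m) \<le> plen n (gpref g m') + (m - m')" using Suc by simp
    have "plen n (gpref g (Suc m)) \<le> plen n (gpref g m) + 1"
      using gpref_Suc[of m g] step_le[OF gpref_perm[OF vt] vt_props(1-3)[OF vt, of m]] Suc.prems by simp
    then show ?thesis using ih False Suc.prems by simp
  qed
qed

lemma chain_merge:
  assumes g: "g \<in> Sigma_n n k" and m: "m < k"
  shows "snd (g!m) \<notin> orbit (gpref g m) (fst (g!m))"
proof
  have vt: "\<forall>t\<in>set g. valid_transp n t" and len: "length g = k" and pk: "plen n (tprod g) = k"
    using g unfolding Sigma_n_def by auto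
  have pk': "plen n (gpref g k) = k" using pk len unfolding gpref_def by simp
  assume bi: "snd (g!m) \<in> orbit (gpref g m) (fst (g!m))"
  have "plen n (gpref g m) = plen n (gpref g (Suc m)) + 1"
    using step_split[OF gpref_perm[OF vt] vt_props(1-3)[OF vt, of m] bi] gpref_Suc[of m g] m len by simp
  moreover have "plen n (gpref g m) \<le> m" using gp_le[OF vt, of 0 m] m len by (simp add: gpref_0 plen_id)
  moreover have "plen n (gpref g k) \<le> plen n (gpref g (Suc m)) + (k - Suc m)"
    using gp_le[OF vt, of "Suc m" k] m len by simp
  ultimately show False using pk' m by simp
qed

lemma chain_NC:
  assumes n: "n \<ge> 1" and g: "g \<in> Sigma_n n k" and m: "m \<le> k"
  shows "NCp n (gpref g m)"
proof -
  have vt: "\<forall>t\<in>set g. valid_transp n t" and len: "length g = k"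
    and pl: "pleq n (tprod g) (longcyc n)"
    using g unfolding Sigma_n_def by auto
  have gk: "gpref g k = tprod g" unfolding gpref_def using len by simp
  have top: "NCp n (gpref g k)" unfolding gk
    by (rule E[OF n _ pl]) (use gpref_perm[OF vt, of k] gk len in simp)
  have "\<forall>d. d \<le> k \<longrightarrow> NCp n (gpref g (k - d))"
  proof (intro allI)
    fix d show "d \<le> k \<longrightarrow> NCp n (gpref g (k - d))"
    proof (induction d)
      case 0 then show ?case using top by simp
    next
      case (Suc d)
      show ?case
      proof
        assume dk: "Suc d \<le> k"
        define j where "j = k - Suc d"
        have jk: "j < k" and sj: "Suc j = k - d" unfolding j_def using dk by auto
        define a where "a = fst (g!j)"
        define b where "b = snd (g!j)"
        have ab: "a \<noteq> b" "a \<in> {1..n}" "b \<in> {1..n}" unfolding a_def b_def using vt_props[OF vt, of j] jk len by auto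
        have jp: "gpref g j permutes {1..n}" using gpref_perm[OF vt, of j] jk len by simp
        have nb: "b \<notin> orbit (gpref g j) a" unfolding a_def b_def by (rule chain_merge[OF g jk])
        have gs: "gpref g (Suc j) = gpref g j \<circ> transpose a b" unfolding a_def b_def
          using gpref_Suc[of j g] jk len by simp
        have "d \<le> k" using dk by simp
        then have ncs: "NCp n (gpref g (Suc j))" unfolding sj using Suc.IH by blast
        have sp: "gpref g (Suc j) permutes {1..n}" using gpref_perm[OF vt, of "Suc j"] jk len by simp
        have "b \<in> orbit (gpref g (Suc j)) a" unfolding gs by (rule merge_in[OF perm_n[OF jp] ab(1) nb])
        then have "NCp n (gpref g (Suc j) \<circ> transpose a b)" by (rule S_split[OF sp ncs ab])
        moreover have "gpref g (Suc j) \<circ> transpose a b = gpref g j" unfolding gs by (simp add: o_assoc[symmetric])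
        ultimately show "NCp n (gpref g (k - Suc d))" unfolding j_def by simp
      qed
    qed
  qed
  then have "NCp n (gpref g (k - (k - m)))" by simp
  moreover have "k - (k - m) = m" using m by simp
  ultimately show ?thesis by simp
qed


lemma F1: "1 \<le> i \<Longrightarrow> i < j \<Longrightarrow> j \<le> n \<Longrightarrow> s \<in> {1..n} \<Longrightarrow> \<not> btw n i j s \<Longrightarrow> i < s \<and> s \<le> j"
  unfolding btw_def by (auto split: if_split_asm)

lemma F2: "s < j \<Longrightarrow> j \<le> n \<Longrightarrow> x \<in> {1..n} \<Longrightarrow> \<not> btw n j x s \<Longrightarrow> s \<le> x \<and> x \<le> j"
  unfolding btw_def by (auto split: if_split_asm)

lemma orbit_mono_merge:
  assumes pf: "permutation f" and ab: "a \<noteq> b" and nb: "b \<notin> orbit f a"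
  shows "orbit f x \<subseteq> orbit (f \<circ> transpose a b) x"
proof (cases "x \<in> orbit f a \<union> orbit f b")
  case True
  have pg: "permutation (f \<circ> transpose a b)" by (intro permutation_compose pf permutation_swap_id)
  have e: "orbit (f \<circ> transpose a b) a = orbit f a \<union> orbit f b" by (rule merge_orbit(1)[OF pf ab nb])
  have "orbit f x = orbit f a \<or> orbit f x = orbit f b" using True orbit_cl[OF pf] by blast
  then have "orbit f x \<subseteq> orbit (f \<circ> transpose a b) a" using e by blast
  moreover have "orbit (f \<circ> transpose a b) x = orbit (f \<circ> transpose a b) a"
    using orbit_cl[OF pg] True e by blast
  ultimately show ?thesis by simp
next
  case False then show ?thesis using merge_orbit(2)[OF pf ab nb False] by simp
qed

lemma step_claims:
  assumes sp: "f permutes {1..(n::nat)}" and ncs: "NCp n f" and nct: "NCp n (f \<circ> transpose i j)"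
    and ij: "1 \<le> i" "i < j" "j \<le> n" and nb: "j \<notin> orbit f i"
  shows "\<forall>x\<in>orbit f j. i < x" and "\<forall>x\<in>orbit f j. x \<le> j"
    and "\<forall>y\<in>orbit f i. (\<forall>x\<in>orbit f j. y < x) \<longrightarrow> y \<le> i"
    and "\<forall>x\<in>orbit f (i+1). i < x"
proof -
  have pf: "permutation f" using perm_n[OF sp] .
  define g where "g = f \<circ> transpose i j"
  have gp: "g permutes {1..n}" unfolding g_def by (rule perm_comp_t[OF sp]) (use ij in auto)
  have i1: "i \<in> {1..n}" and j1: "j \<in> {1..n}" using ij by auto
  have ij': "i \<noteq> j" using ij by simp
  define s where "s = f j"
  have s1: "s \<in> {1..n}" unfolding s_def using permutes_in_image[OF sp] j1 by simp
  have gi: "g i = s" unfolding g_def s_def by simp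
  have jg: "j \<in> orbit g i" unfolding g_def by (rule merge_in[OF pf ij' nb])
  have "\<not> btw n i j (g i)" by (rule NC_Q[OF gp nct[folded g_def] i1 jg])
  then have is1: "i < s \<and> s \<le> j" using F1[OF ij s1] gi by simp
  have sB: "s \<in> orbit f j" unfolding s_def by (rule orbit.base)
  have B: "\<forall>x\<in>orbit f j. s \<le> x \<and> x \<le> j"
  proof
    fix x assume x: "x \<in> orbit f j"
    show "s \<le> x \<and> x \<le> j"
    proof (cases "s = j")
      case True
      then have "orbit f j = {j}" unfolding s_def using orbit_eq_singleton_iff by metis
      then show ?thesis using x True by simp
    next
      case False
      have "\<not> btw n j x (f j)" by (rule NC_Q[OF sp ncs j1 x])
      then show ?thesis using F2[of s j n x] False is1 ij orbit_in[OF sp j1 x] unfolding s_def by simp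
    qed
  qed
  show c1: "\<forall>x\<in>orbit f j. i < x" using B is1 by force
  show "\<forall>x\<in>orbit f j. x \<le> j" using B by blast
  show "\<forall>y\<in>orbit f i. (\<forall>x\<in>orbit f j. y < x) \<longrightarrow> y \<le> i"
  proof (intro ballI impI)
    fix y assume y: "y \<in> orbit f i" and lt: "\<forall>x\<in>orbit f j. y < x"
    have ys: "y < s" using lt sB by blast
    have "y \<in> orbit g i" unfolding g_def merge_orbit(1)[OF pf ij' nb] using y by simp
    then have nb2: "\<not> btw n i y (g i)" by (rule NC_Q[OF gp nct[folded g_def] i1])
    have y1: "y \<in> {1..n}" using orbit_in[OF sp i1 y] .
    show "y \<le> i"
    proof (rule ccontr)
      assume "\<not> y \<le> i"
      then have "btw n i y s" using ys is1 y1 unfolding btw_def by auto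
      then show False using nb2 gi by simp
    qed
  qed
  show "\<forall>x\<in>orbit f (i+1). i < x"
  proof (cases "i + 1 \<in> orbit f j")
    case True
    then have "orbit f (i+1) = orbit f j" using orbit_cl[OF pf] by blast
    then show ?thesis using c1 by simp
  next
    case False
    then have "s \<noteq> i + 1" using sB by blast
    then have si: "i + 1 < s" using is1 by simp
    define I where "I = {w. btw n i w s}"
    have inI: "i + 1 \<in> I" unfolding I_def btw_def using si s1 is1 by auto
    have cl: "\<forall>w\<in>I. f w \<in> I"
    proof
      fix w assume w: "w \<in> I"
      have wi: "w \<noteq> i" using btw_neq w unfolding I_def by blast
      have wj: "w \<noteq> j" using w is1 unfolding I_def btw_def by auto
      have "g w = f w" unfolding g_def using wi wj by simp
      moreover have "btw n i w (g i)" using w gi unfolding I_def by simp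
      then have "btw n i (g w) (g i)" using nct[folded g_def] i1 unfolding NCp_def by blast
      ultimately show "f w \<in> I" using gi unfolding I_def by simp
    qed
    have "orbit f (i+1) \<subseteq> I" by (rule orbit_least[OF inI cl])
    then show ?thesis using is1 unfolding I_def btw_def by auto
  qed
qed


lemma chain_step:
  assumes n: "n \<ge> 1" and g: "g \<in> Sigma_n n k" and m: "m < k"
  shows "gpref g m permutes {1..n}" "NCp n (gpref g m)"
    "NCp n (gpref g m \<circ> transpose (fst (g!m)) (snd (g!m)))"
    "1 \<le> fst (g!m)" "fst (g!m) < snd (g!m)" "snd (g!m) \<le> n"
    "snd (g!m) \<notin> orbit (gpref g m) (fst (g!m))"
    "gpref g (Suc m) = gpref g m \<circ> transpose (fst (g!m)) (snd (g!m))"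
proof -
  have vt: "\<forall>t\<in>set g. valid_transp n t" and len: "length g = k"
    using g unfolding Sigma_n_def by auto
  show "gpref g m permutes {1..n}" using gpref_perm[OF vt, of m] m len by simp
  show "NCp n (gpref g m)" using chain_NC[OF n g, of m] m by simp
  show gs: "gpref g (Suc m) = gpref g m \<circ> transpose (fst (g!m)) (snd (g!m))"
    using gpref_Suc[of m g] m len by simp
  show "NCp n (gpref g m \<circ> transpose (fst (g!m)) (snd (g!m)))"
    using chain_NC[OF n g, of "Suc m"] m gs by simp
  show "1 \<le> fst (g!m)" "fst (g!m) < snd (g!m)" "snd (g!m) \<le> n"
    using vt_props[OF vt, of m] m len by auto
  show "snd (g!m) \<notin> orbit (gpref g m) (fst (g!m))" by (rule chain_merge[OF g m])
qed

lemma min_inv: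
  assumes n: "n \<ge> 1" and g: "g \<in> Sigma_n n k"
  shows "m \<le> k \<Longrightarrow> \<forall>x\<in>{1..n}. gpref g m x \<noteq> x \<longrightarrow>
           Min (orbit (gpref g m) x) \<in> (\<lambda>s. fst (g ! (s - 1))) ` {1..m}"
proof (induction m)
  case 0 then show ?case by (simp add: gpref_0)
next
  case (Suc m)
  then have m: "m < k" by simp
  note cs = chain_step[OF n g m]
  define f where "f = gpref g m"
  define i where "i = fst (g!m)"
  define j where "j = snd (g!m)"
  have sp: "f permutes {1..n}" unfolding f_def using cs(1) .
  have pf: "permutation f" using perm_n[OF sp] .
  have ij: "1 \<le> i" "i < j" "j \<le> n" unfolding i_def j_def using cs(4-6) by auto
  have ij': "i \<noteq> j" using ij by simp
  have nb: "j \<notin> orbit f i" unfolding f_def i_def j_def using cs(7) .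
  have gs: "gpref g (Suc m) = f \<circ> transpose i j" unfolding f_def i_def j_def using cs(8) .
  have c1: "\<forall>x\<in>orbit f j. i < x"
    using step_claims(1)[OF sp cs(2)[folded f_def] cs(3)[folded f_def i_def j_def] ij nb] .
  have IH: "\<forall>x\<in>{1..n}. f x \<noteq> x \<longrightarrow> Min (orbit f x) \<in> (\<lambda>s. fst (g ! (s - 1))) ` {1..m}"
    using Suc m unfolding f_def by simp
  have i1: "i \<in> {1..n}" and j1: "j \<in> {1..n}" using ij by auto
  have sub: "(\<lambda>s. fst (g ! (s - 1))) ` {1..m} \<subseteq> (\<lambda>s. fst (g ! (s - 1))) ` {1..Suc m}" by auto
  show ?case
  proof (intro ballI impI)
    fix x assume x: "x \<in> {1..n}" and fx: "gpref g (Suc m) x \<noteq> x"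
    show "Min (orbit (gpref g (Suc m)) x) \<in> (\<lambda>s. fst (g ! (s - 1))) ` {1..Suc m}"
    proof (cases "x \<in> orbit f i \<union> orbit f j")
      case True
      have pg: "permutation (f \<circ> transpose i j)" by (intro permutation_compose pf permutation_swap_id)
      have e: "orbit (f \<circ> transpose i j) i = orbit f i \<union> orbit f j" by (rule merge_orbit(1)[OF pf ij' nb])
      have ox: "orbit (gpref g (Suc m)) x = orbit f i \<union> orbit f j"
        unfolding gs using orbit_cl[OF pg, of x i] True e by simp
      have fA: "finite (orbit f i)" "orbit f i \<noteq> {}" using finite_subset[OF permutes_orbit_subset[OF sp i1]] orbit_nonempty[of f i] by auto
      have fB: "finite (orbit f j)" "orbit f j \<noteq> {}" using finite_subset[OF permutes_orbit_subset[OF sp j1]] orbit_nonempty[of f j] by auto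
      have iA: "i \<in> orbit f i" by (rule permutation_self_in_orbit[OF pf])
      have "Min (orbit f i) \<le> i" using Min_le[OF fA(1) iA] .
      moreover have "i < Min (orbit f j)" using c1 Min_in[OF fB] by blast
      ultimately have mm: "Min (orbit f i \<union> orbit f j) = Min (orbit f i)"
        using Min_Un[OF fA(1) fA(2) fB(1) fB(2)] by simp
      show ?thesis
      proof (cases "f i = i")
        case True
        then have "orbit f i = {i}" using orbit_eq_singleton_iff by metis
        then have "Min (orbit (gpref g (Suc m)) x) = i" using ox mm by simp
        moreover have "i = (\<lambda>s. fst (g ! (s - 1))) (Suc m)" unfolding i_def by simp
        ultimately show ?thesis by force
      next
        case False
        then have "Min (orbit f i) \<in> (\<lambda>s. fst (g ! (s - 1))) ` {1..m}" using IH i1 by blast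
        then show ?thesis using ox mm sub by auto
      qed
    next
      case False
      have e: "orbit (gpref g (Suc m)) x = orbit f x" unfolding gs by (rule merge_orbit(2)[OF pf ij' nb False])
      have "x \<noteq> i" "x \<noteq> j" using False permutation_self_in_orbit[OF pf] by auto
      then have "gpref g (Suc m) x = f x" unfolding gs by simp
      then have "f x \<noteq> x" using fx by simp
      then have "Min (orbit f x) \<in> (\<lambda>s. fst (g ! (s - 1))) ` {1..m}" using IH x by blast
      then show ?thesis using e sub by auto
    qed
  qed
qed


lemma claim4:
  assumes n: "n \<ge> 1" and g: "g \<in> Sigma_n n k" and m: "m < k"
    and ni: "fst (g!m) + 1 \<notin> (\<lambda>s. fst (g ! (s - 1))) ` {1..m}"
  shows "orbit (gpref g m) (fst (g!m) + 1) = {fst (g!m) + 1}"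
proof -
  note cs = chain_step[OF n g m]
  define f where "f = gpref g m"
  define i where "i = fst (g!m)"
  define j where "j = snd (g!m)"
  have sp: "f permutes {1..n}" unfolding f_def using cs(1) .
  have pf: "permutation f" using perm_n[OF sp] .
  have ij: "1 \<le> i" "i < j" "j \<le> n" unfolding i_def j_def using cs(4-6) by auto
  have nb: "j \<notin> orbit f i" unfolding f_def i_def j_def using cs(7) .
  have c3: "\<forall>x\<in>orbit f (i+1). i < x"
    using step_claims(4)[OF sp cs(2)[folded f_def] cs(3)[folded f_def i_def j_def] ij nb] .
  have i1: "i + 1 \<in> {1..n}" using ij by auto
  show ?thesis unfolding f_def[symmetric] i_def[symmetric]
  proof (rule ccontr)
    assume ne: "orbit f (i + 1) \<noteq> {i + 1}"
    then have "f (i+1) \<noteq> i + 1" using orbit_eq_singleton_iff by metis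
    then have mi: "Min (orbit f (i+1)) \<in> (\<lambda>s. fst (g ! (s - 1))) ` {1..m}"
      using min_inv[OF n g, of m] m i1 unfolding f_def by simp
    have fin: "finite (orbit f (i+1))" using finite_subset[OF permutes_orbit_subset[OF sp i1]] by simp
    have "Min (orbit f (i+1)) = i + 1"
    proof (rule Min_eqI[OF fin])
      show "i + 1 \<in> orbit f (i + 1)" by (rule permutation_self_in_orbit[OF pf])
      show "\<And>y. y \<in> orbit f (i + 1) \<Longrightarrow> i + 1 \<le> y" using c3 by force
    qed
    then show False using mi ni unfolding i_def by simp
  qed
qed

lemma claim5:
  assumes n: "n \<ge> 1" and g: "g \<in> Sigma_n n k" and k1: "k \<ge> 1" and l: "l \<in> {1..k}" and kn: "k = n - 1"
    and imax: "fst (g!(l-1)) = Max ((\<lambda>s. fst (g!(s-1))) ` {1..n-1})"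
    and lmax: "l = Max {s\<in>{1..k}. fst (g!(s-1)) = fst (g!(l-1))}"
  shows "snd (g!(l-1)) = fst (g!(l-1)) + 1"
proof (rule ccontr)
  define II where "II = (\<lambda>s. fst (g!(s-1)))"
  define m where "m = l - 1"
  define i where "i = fst (g!m)"
  define j where "j = snd (g!m)"
  have mk: "m < k" using l unfolding m_def by auto
  have lm: "l = Suc m" using l unfolding m_def by auto
  note cs = chain_step[OF n g mk]
  have ij: "1 \<le> i" "i < j" "j \<le> n" unfolding i_def j_def using cs(4-6) by auto
  assume "snd (g!(l-1)) \<noteq> fst (g!(l-1)) + 1"
  then have ji: "i + 1 < j" using ij unfolding i_def j_def m_def by simp
  have hle: "\<And>s. s \<in> {1..k} \<Longrightarrow> II s \<le> i"
  proof -
    fix s assume "s \<in> {1..k}"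
    then have "II s \<in> II ` {1..n-1}" using kn by simp
    then show "II s \<le> i" using imax unfolding II_def i_def m_def by simp
  qed
  have lle: "\<And>s. s \<in> {1..k} \<Longrightarrow> II s = i \<Longrightarrow> s \<le> l"
  proof -
    fix s assume "s \<in> {1..k}" "II s = i"
    then have "s \<in> {s\<in>{1..k}. fst (g!(s-1)) = fst (g!(l-1))}" unfolding II_def i_def m_def by simp
    moreover have "finite {s\<in>{1..k}. fst (g!(s-1)) = fst (g!(l-1))}" by simp
    ultimately show "s \<le> l" using lmax by (metis Max_ge)
  qed
  have ni: "i + 1 \<notin> II ` {1..m}"
  proof
    assume "i + 1 \<in> II ` {1..m}"
    then obtain s where "s \<in> {1..m}" "II s = i + 1" by auto
    then show False using hle[of s] mk by auto
  qed
  have fix0: "gpref g m (i+1) = i + 1"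
    using claim4[OF n g mk] ni orbit_eq_singleton_iff unfolding II_def i_def by metis
  have main: "\<forall>d. l + d \<le> k \<longrightarrow> gpref g (l + d) (i+1) = i + 1 \<and> j \<in> orbit (gpref g (l + d)) i"
  proof
    fix d show "l + d \<le> k \<longrightarrow> gpref g (l + d) (i+1) = i + 1 \<and> j \<in> orbit (gpref g (l + d)) i"
    proof (induction d)
      case 0
      have g1: "gpref g l = gpref g m \<circ> transpose i j" using cs(8) lm unfolding i_def j_def by simp
      have "gpref g l (i+1) = i + 1" unfolding g1 using fix0 ij ji by simp
      moreover have "j \<in> orbit (gpref g l) i" unfolding g1 i_def j_def
        by (rule merge_in[OF perm_n[OF cs(1)] _ cs(7)]) (use cs(5) in simp)
      ultimately show ?case by simp
    next
      case (Suc d)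
      show ?case
      proof
        assume ld: "l + Suc d \<le> k"
        define m' where "m' = l + d"
        have mk': "m' < k" using ld unfolding m'_def by simp
        note cs' = chain_step[OF n g mk']
        define f where "f = gpref g m'"
        define i' where "i' = fst (g!m')"
        define j' where "j' = snd (g!m')"
        have sp: "f permutes {1..n}" unfolding f_def using cs'(1) .
        have pf: "permutation f" using perm_n[OF sp] .
        have ij': "1 \<le> i'" "i' < j'" "j' \<le> n" unfolding i'_def j'_def using cs'(4-6) by auto
        have nb: "j' \<notin> orbit f i'" unfolding f_def i'_def j'_def using cs'(7) .
        have gs: "gpref g (l + Suc d) = f \<circ> transpose i' j'" unfolding f_def i'_def j'_def m'_def
          using cs'(8) unfolding m'_def by simp
        have nc: "NCp n (f \<circ> transpose i' j')" using cs'(3) unfolding f_def i'_def j'_def .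
        have IH: "f (i+1) = i + 1" "j \<in> orbit f i" using Suc.IH ld unfolding f_def m'_def by auto
        have sm: "Suc m' \<in> {1..k}" using mk' by simp
        have "II (Suc m') = i'" unfolding II_def i'_def by simp
        then have "i' \<le> i" using hle[OF sm] by simp
        moreover have "i' \<noteq> i"
        proof
          assume "i' = i"
          then have "Suc m' \<le> l" using lle[OF sm] \<open>II (Suc m') = i'\<close> by simp
          then show False unfolding m'_def by simp
        qed
        ultimately have ii': "i' < i" by simp
        have jo: "j \<in> orbit (f \<circ> transpose i' j') i"
          using orbit_mono_merge[OF pf _ nb] IH(2) ij' by auto
        have "(f \<circ> transpose i' j') (i+1) = i + 1"
        proof (cases "j' = i + 1")
          case True
          have gi': "(f \<circ> transpose i' j') i' = i + 1" using True IH(1) by simp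
          have i'1: "i' \<in> {1..n}" using ij' by simp
          have "btw n i' i ((f \<circ> transpose i' j') i')" unfolding gi' btw_def using ij ii' ji by auto
          then have "orbit (f \<circ> transpose i' j') i \<subseteq> {w. btw n i' w ((f \<circ> transpose i' j') i')}"
            by (rule NC_arc[OF nc i'1])
          then have "btw n i' j (i + 1)" using jo gi' by auto
          then show ?thesis using ii' ji unfolding btw_def by auto
        next
          case False
          then show ?thesis using ii' IH(1) by simp
        qed
        then show "gpref g (l + Suc d) (i+1) = i + 1 \<and> j \<in> orbit (gpref g (l + Suc d)) i"
          unfolding gs using jo by simp
      qed
    qed
  qed
  have lk: "l + (k - l) = k" using l by simp
  have fk: "gpref g k (i+1) = i + 1" using main[rule_format, of "k - l"] lk by simp
  have vt: "\<forall>t\<in>set g. valid_transp n t" and len: "length g = k" and pk: "plen n (tprod g) = k"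
    using g unfolding Sigma_n_def by auto
  have kp: "gpref g k permutes {1..n}" using gpref_perm[OF vt, of k] len by simp
  have "plen n (gpref g k) = n - 1" using pk len kn unfolding gpref_def by simp
  then have "ncycles n (gpref g k) = 1" using ncycles_le[OF kp] n unfolding plen_def by linarith
  then have c1: "card ((\<lambda>x. orbit (gpref g k) x) ` {1..n}) = 1" using ncycles_orb[OF kp] by simp
  have i1: "i + 1 \<in> {1..n}" and o1: "1 \<in> {1..n}" using ij n by auto
  have "orbit (gpref g k) 1 = orbit (gpref g k) (i+1)"
    using c1 i1 o1 by (metis card_1_singletonE image_eqI singletonD)
  moreover have "orbit (gpref g k) (i+1) = {i+1}" using fk orbit_eq_singleton_iff by metis
  moreover have "1 \<in> orbit (gpref g k) 1" by (rule permutation_self_in_orbit[OF perm_n[OF kp]])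
  ultimately show False using ij by simp
qed


theorem lemma3p1:
  fixes n k l :: nat and g :: "(nat \<times> nat) list"
  assumes "n \<ge> 1" "k \<ge> 1" "g \<in> Sigma_n n k" "l \<in> {1..k}"
  defines "ii \<equiv> (\<lambda>s. fst (g ! (s - 1)))"
      and "jj \<equiv> (\<lambda>s. snd (g ! (s - 1)))"
      and "C \<equiv> cyc (gpref g (l - 1))"
  shows "((\<forall>x \<in> C (jj l). ii l < x)
          \<and> ii l \<in> {y \<in> C (ii l). \<forall>x \<in> C (jj l). y < x}
          \<and> (\<forall>y \<in> {y \<in> C (ii l). \<forall>x \<in> C (jj l). y < x}. y \<le> ii l))
         \<and> jj l = Max (C (jj l))
         \<and> (\<forall>x \<in> C (ii l + 1). ii l < x)
         \<and> (ii l + 1 \<notin> ii ` {1..l - 1} \<longrightarrow> C (ii l + 1) = {ii l + 1})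
         \<and> (k = n - 1 \<and> ii l = Max (ii ` {1..n - 1})
              \<and> l = Max {s \<in> {1..k}. ii s = ii l} \<longrightarrow> jj l = ii l + 1)"
proof -
  note n = assms(1) and g = assms(3) and l = assms(4)
  define m where "m = l - 1"
  have mk: "m < k" using l unfolding m_def by auto
  note cs = chain_step[OF n g mk]
  define f where "f = gpref g m"
  define i where "i = fst (g!m)"
  define j where "j = snd (g!m)"
  have sp: "f permutes {1..n}" unfolding f_def using cs(1) .
  have pf: "permutation f" using perm_n[OF sp] .
  have ij: "1 \<le> i" "i < j" "j \<le> n" unfolding i_def j_def using cs(4-6) by auto
  have nb: "j \<notin> orbit f i" unfolding f_def i_def j_def using cs(7) .
  note sc = step_claims[OF sp cs(2)[folded f_def] cs(3)[folded f_def i_def j_def] ij nb]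
  have Ceq: "C = orbit f" unfolding C_def f_def m_def using cyc_orbit[OF pf[unfolded f_def m_def]] by auto
  have iil: "ii l = i" unfolding ii_def i_def m_def ..
  have jjl: "jj l = j" unfolding jj_def j_def m_def ..
  have j1: "j \<in> {1..n}" using ij by simp
  have p1: "\<forall>x \<in> C (jj l). ii l < x" unfolding Ceq iil jjl using sc(1) .
  have p2: "ii l \<in> {y \<in> C (ii l). \<forall>x \<in> C (jj l). y < x}"
    unfolding Ceq iil jjl using sc(1) permutation_self_in_orbit[OF pf] by simp
  have p3: "\<forall>y \<in> {y \<in> C (ii l). \<forall>x \<in> C (jj l). y < x}. y \<le> ii l"
    unfolding Ceq iil jjl using sc(3) by simp
  have p4: "jj l = Max (C (jj l))"
  proof -
    have fin: "finite (orbit f j)" using finite_subset[OF permutes_orbit_subset[OF sp j1]] by simp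
    have "Max (orbit f j) = j"
      by (rule Max_eqI[OF fin]) (use sc(2) permutation_self_in_orbit[OF pf] in auto)
    then show ?thesis unfolding Ceq jjl by simp
  qed
  have p5: "\<forall>x \<in> C (ii l + 1). ii l < x" unfolding Ceq iil using sc(4) .
  have p6: "ii l + 1 \<notin> ii ` {1..l - 1} \<longrightarrow> C (ii l + 1) = {ii l + 1}"
  proof
    assume "ii l + 1 \<notin> ii ` {1..l - 1}"
    then have "fst (g!m) + 1 \<notin> (\<lambda>s. fst (g ! (s - 1))) ` {1..m}" unfolding iil i_def ii_def m_def .
    then have "orbit (gpref g m) (fst (g!m) + 1) = {fst (g!m) + 1}" by (rule claim4[OF n g mk])
    then show "C (ii l + 1) = {ii l + 1}" unfolding Ceq iil f_def i_def .
  qed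
  have p7: "k = n - 1 \<and> ii l = Max (ii ` {1..n - 1}) \<and> l = Max {s \<in> {1..k}. ii s = ii l} \<longrightarrow> jj l = ii l + 1"
  proof
    assume h: "k = n - 1 \<and> ii l = Max (ii ` {1..n - 1}) \<and> l = Max {s \<in> {1..k}. ii s = ii l}"
    show "jj l = ii l + 1"
      using claim5[OF n g assms(2) l] h unfolding ii_def jj_def by blast
  qed
  show ?thesis using p1 p2 p3 p4 p5 p6 p7 by blast
qed

end
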